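(* Let $N\ge 1$ be an integer, $\Omega>0$, $\bar\gamma>0$, and consider the high-SNR asymptotic delay-tolerant throughput $$\tilde\rho(\tau)=\frac{1-\tau}{\ln 2}\left[2\psi(N)+\ln\bar\gamma+2\ln\Omega-\ln\!\left(\frac{1-\tau}{\tau}\right)\right],\qquad \tau\in(0,1).$$ Then the throughput-optimal energy harvesting time, i.e. the maximizer of $\tilde\rho$ over $(0,1)$, is $$\tau_{tol}^*=\frac{1}{1+W\!\left(\bar\gamma\,\Omega^2 e^{2\psi(N)-1}\right)}.$$ *)

theory Defs
  imports "HOL-Analysis.Analysis"
begin

text \<open>Principal branch of the Lambert W function (the branch with W x \<ge> -1),
  defined for x \<ge> -exp(-1) as the unique w \<ge> -1 with w * exp w = x.\<close>
definition Lambert_W :: "real \<Rightarrow> real" where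
  "Lambert_W x = (THE w. w \<ge> -1 \<and> w * exp w = x)"

definition rho_tilde :: "nat \<Rightarrow> real \<Rightarrow> real \<Rightarrow> real \<Rightarrow> real" where
  "rho_tilde N \<Omega> \<gamma> \<tau> =
     (1 - \<tau>) / ln 2 * (2 * Digamma (real N) + ln \<gamma> + 2 * ln \<Omega> - ln ((1 - \<tau>) / \<tau>))"

end

theory Submission
  imports Defs
begin

lemma ln_strict: "0 < (t::real) \<Longrightarrow> t \<noteq> 1 \<Longrightarrow> ln t < t - 1"
  using ln_le_minus_one[of t] ln_eq_minus_one[of t] by fastforce

lemma xexp_mono: "0 \<le> (w1::real) \<Longrightarrow> w1 < w2 \<Longrightarrow> w1 * exp w1 < w2 * exp w2"
proof -
  assume a: "0 \<le> w1" "w1 < w2"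
  have "w1 * exp w1 \<le> w1 * exp w2" using a by (simp add: mult_left_mono)
  also have "\<dots> < w2 * exp w2" using a by simp
  finally show ?thesis .
qed

lemma lambertW_pos:
  assumes "a > (0::real)"
  shows "Lambert_W a > 0 \<and> Lambert_W a * exp (Lambert_W a) = a"
proof -
  have "\<exists>w. 0 \<le> w \<and> w \<le> a \<and> w * exp w = a"
  proof (rule IVT)
    show "0 * exp 0 \<le> a" using assms by simp
    show "a \<le> a * exp a" using assms by simp
    show "0 \<le> a" using assms by simp
    show "\<forall>x. 0 \<le> x \<and> x \<le> a \<longrightarrow> isCont (\<lambda>w. w * exp w) x" by (auto intro!: continuous_intros)
  qed
  then obtain w where w: "0 \<le> w" "w * exp w = a" by blast
  have uniq: "v = w" if "v \<ge> -1" "v * exp v = a" for v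
  proof -
    have "v \<ge> 0"
    proof (rule ccontr)
      assume "\<not> v \<ge> 0"
      then have "v * exp v < 0" by (simp add: mult_neg_pos)
      with that assms show False by simp
    qed
    show ?thesis using xexp_mono[of v w] xexp_mono[of w v] w that \<open>v \<ge> 0\<close>
      by (metis less_irrefl linorder_neqE_linordered_idom)
  qed
  have "Lambert_W a = w"
    unfolding Lambert_W_def
    by (rule the_equality) (use w uniq in auto)
  moreover have "w \<noteq> 0" using w assms by auto
  ultimately show ?thesis using w by auto
qed

theorem proposition2:
  fixes N :: nat and \<Omega> \<gamma> :: real
  assumes "N \<ge> 1" and "\<Omega> > 0" and "\<gamma> > 0"
  defines "\<tau>opt \<equiv> 1 / (1 + Lambert_W (\<gamma> * \<Omega>\<^sup>2 * exp (2 * Digamma (real N) - 1)))"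
  shows "\<tau>opt \<in> {0<..<1} \<and>
         (\<forall>\<tau>\<in>{0<..<1}. \<tau> \<noteq> \<tau>opt \<longrightarrow> rho_tilde N \<Omega> \<gamma> \<tau> < rho_tilde N \<Omega> \<gamma> \<tau>opt)"
proof -
  define a where "a = \<gamma> * \<Omega>\<^sup>2 * exp (2 * Digamma (real N) - 1)"
  define x0 where "x0 = Lambert_W a"
  define c where "c = 2 * Digamma (real N) + ln \<gamma> + 2 * ln \<Omega>"
  have apos: "a > 0" using assms unfolding a_def by simp
  from lambertW_pos[OF apos] have x0: "x0 > 0" "x0 * exp x0 = a" unfolding x0_def by auto
  have "ln a = ln x0 + x0" using x0 ln_mult[of x0 "exp x0"] by simp
  moreover have "ln a = c - 1" unfolding a_def c_def using assms
    by (simp add: ln_mult ln_realpow)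
  ultimately have c: "c = ln x0 + x0 + 1" by simp
  have to: "\<tau>opt = 1 / (1 + x0)" unfolding \<tau>opt_def x0_def a_def by simp
  have toin: "\<tau>opt \<in> {0<..<1}" using x0(1) unfolding to by (simp add: divide_less_eq)
  have r0: "rho_tilde N \<Omega> \<gamma> \<tau>opt = x0 / ln 2"
  proof -
    have h1: "(1 - \<tau>opt) / \<tau>opt = x0" using x0(1) unfolding to by (simp add: field_simps)
    have h2: "1 - \<tau>opt = x0 / (1 + x0)" using x0(1) unfolding to by (simp add: field_simps)
    have "rho_tilde N \<Omega> \<gamma> \<tau>opt = (1 - \<tau>opt) / ln 2 * (c - ln x0)"
      unfolding rho_tilde_def c_def h1 ..
    also have "\<dots> = x0 / (1 + x0) / ln 2 * (1 + x0)" using c h2 by (simp add: add.commute)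
    also have "\<dots> = x0 / ln 2" using x0(1) by (simp add: divide_simps)
    finally show ?thesis .
  qed
  have "rho_tilde N \<Omega> \<gamma> \<tau> < x0 / ln 2" if t: "\<tau> \<in> {0<..<1}" "\<tau> \<noteq> \<tau>opt" for \<tau>
  proof -
    define x where "x = (1 - \<tau>) / \<tau>"
    have xp: "x > 0" using t unfolding x_def by simp
    have xne: "x \<noteq> x0"
    proof
      assume "x = x0"
      then have "\<tau> * (1 + x0) = 1" using t unfolding x_def by (simp add: field_simps)
      then have "\<tau> = 1 / (1 + x0)" using x0(1) by (simp add: eq_divide_eq)
      with t to show False by simp
    qed
    have "ln (x0 / x) < x0 / x - 1" using ln_strict[of "x0/x"] xp x0 xne by simp
    then have lt: "ln x0 - ln x < x0 / x - 1" using xp x0 by (simp add: ln_div)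
    have "(1 - \<tau>) * (c - ln x) < (1 - \<tau>) * (x0 / x + x0)"
      using lt c t by (intro mult_strict_left_mono) auto
    also have "\<dots> = x0" using t unfolding x_def by (simp add: field_simps)
    finally have "(1 - \<tau>) * (c - ln x) < x0" .
    then show ?thesis unfolding rho_tilde_def c_def[symmetric] x_def[symmetric]
      by (simp add: divide_strict_right_mono)
  qed
  then show ?thesis using toin r0 by auto
qed

end
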